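(* Let $\alpha,\beta>-1$ and $n\ge 0$. For $z\in\mathcal{E}_\rho$, i.e. $z=\tfrac12(u+u^{-1})$ with $|u|=\rho\ge 1$, $$P_n^{(\alpha,\beta)}(z)=\sum_{k=-n}^{n} d_{|k|,n}\,u^k,$$ where for $0\le k\le n$ $$d_{k,n}=\frac{(n+\alpha+\beta+1)_k\,(k+\alpha+1)_{n-k}}{(n-k)!\,2^{2k}\,\Gamma(k+1)}\;{}_3F_2\!\left[\begin{matrix}k-n,\ n+k+\alpha+\beta+1,\ k+\tfrac12\\ k+\alpha+1,\ 2k+1\end{matrix};1\right].$$
   Context: $P_n^{(\alpha,\beta)}$ is the Jacobi polynomial $P_n^{(\alpha,\beta)}(x)=2^{-n}\sum_{k=0}^n\binom{n+\alpha}{n-k}\binom{n+\beta}{k}(x-1)^k(x+1)^{n-k}$, $\alpha,\beta>-1$. The Bernstein ellipse is $\mathcal{E}_\rho=\{\tfrac12(u+u^{-1}): u=\rho e^{i\theta},\ 0\le\theta<2\pi\}$, $\rho\ge1$. $(a)_0=1$, $(a)_k=a(a+1)\cdots(a+k-1)$ is the Pochhammer symbol, and ${}_3F_2\left[\begin{matrix}a_1,a_2,a_3\\ b_1,b_2\end{matrix};x\right]=\sum_{j\ge0}\frac{(a_1)_j(a_2)_j(a_3)_j}{(b_1)_j(b_2)_j}\frac{x^j}{j!}$ (a terminating sum here since $k-n\le 0$). *)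

theory Defs
  imports "HOL-Analysis.Analysis"
begin

definition jacobiP :: "nat \<Rightarrow> real \<Rightarrow> real \<Rightarrow> complex \<Rightarrow> complex" where
  "jacobiP n \<alpha> \<beta> x =
     (\<Sum>k\<le>n. complex_of_real (((real n + \<alpha>) gchoose (n - k)) * ((real n + \<beta>) gchoose k))
        * (x - 1) ^ k * (x + 1) ^ (n - k)) / 2 ^ n"

definition hyp3F2 :: "real \<Rightarrow> real \<Rightarrow> real \<Rightarrow> real \<Rightarrow> real \<Rightarrow> real \<Rightarrow> real" where
  "hyp3F2 a1 a2 a3 b1 b2 x =
     (\<Sum>j. pochhammer a1 j * pochhammer a2 j * pochhammer a3 j
            / (pochhammer b1 j * pochhammer b2 j) * x ^ j / fact j)"

definition jacobi_d :: "real \<Rightarrow> real \<Rightarrow> nat \<Rightarrow> nat \<Rightarrow> real" where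
  "jacobi_d \<alpha> \<beta> k n =
     pochhammer (real n + \<alpha> + \<beta> + 1) k * pochhammer (real k + \<alpha> + 1) (n - k)
     / (fact (n - k) * 2 ^ (2 * k) * Gamma (real k + 1))
     * hyp3F2 (real k - real n) (real n + real k + \<alpha> + \<beta> + 1) (real k + 1 / 2)
              (real k + \<alpha> + 1) (2 * real k + 1) 1"

end

theory Submission
  imports Defs "HOL-Computational_Algebra.Formal_Power_Series"
begin

definition cc :: "real \<Rightarrow> real \<Rightarrow> nat \<Rightarrow> nat \<Rightarrow> real" where
  "cc \<alpha> \<beta> n j = ((real n + \<alpha>) gchoose (n - j)) * ((real n + \<alpha> + \<beta> + real j) gchoose j)"

lemma vand_step:
  assumes "j \<le> n"
  shows "(\<Sum>k\<le>j. ((real n + \<alpha>) gchoose (n - k)) * ((real n + \<beta>) gchoose k) * real ((n - k) choose (j - k)))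
         = cc \<alpha> \<beta> n j"
proof -
  have t: "((real n + \<alpha>) gchoose (n - k)) * real ((n - k) choose (j - k))
      = ((real n + \<alpha>) gchoose (n - j)) * ((\<alpha> + real j) gchoose (j - k))" if "k \<le> j" for k
  proof -
    have "(n - k) choose (j - k) = (n - k) choose (n - j)"
    proof -
      have "(n - k) - (j - k) = n - j" using that assms by simp
      moreover have "j - k \<le> n - k" using that assms by simp
      ultimately show ?thesis using binomial_symmetric[of "j - k" "n - k"] by simp
    qed
    hence "real ((n - k) choose (j - k)) = (real (n - k) gchoose (n - j))"
      by (simp add: binomial_gbinomial)
    moreover have "((real n + \<alpha>) gchoose (n - k)) * (real (n - k) gchoose (n - j))
        = ((real n + \<alpha>) gchoose (n - j)) * ((real n + \<alpha> - real (n - j)) gchoose ((n - k) - (n - j)))"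
      using gbinomial_trinomial_revision[of "n - j" "n - k" "real n + \<alpha>"] that assms by simp
    moreover have "real n + \<alpha> - real (n - j) = \<alpha> + real j" using assms by simp
    moreover have "(n - k) - (n - j) = j - k" using that assms by simp
    ultimately show ?thesis by simp
  qed
  have "(\<Sum>k\<le>j. ((real n + \<alpha>) gchoose (n - k)) * ((real n + \<beta>) gchoose k) * real ((n - k) choose (j - k)))
     = (\<Sum>k\<le>j. ((real n + \<alpha>) gchoose (n - j)) * (((real n + \<beta>) gchoose k) * ((\<alpha> + real j) gchoose (j - k))))"
  proof (rule sum.cong[OF refl])
    fix k assume "k \<in> {..j}"
    hence tk: "((real n + \<alpha>) gchoose (n - k)) * real ((n - k) choose (j - k))
      = ((real n + \<alpha>) gchoose (n - j)) * ((\<alpha> + real j) gchoose (j - k))" using t by simp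
    have "((real n + \<alpha>) gchoose (n - k)) * ((real n + \<beta>) gchoose k) * real ((n - k) choose (j - k))
      = (((real n + \<alpha>) gchoose (n - k)) * real ((n - k) choose (j - k))) * ((real n + \<beta>) gchoose k)"
      by (simp only: mult_ac)
    also have "\<dots> = ((real n + \<alpha>) gchoose (n - j)) * (((real n + \<beta>) gchoose k) * ((\<alpha> + real j) gchoose (j - k)))"
      by (simp only: tk mult_ac)
    finally show "((real n + \<alpha>) gchoose (n - k)) * ((real n + \<beta>) gchoose k) * real ((n - k) choose (j - k))
      = ((real n + \<alpha>) gchoose (n - j)) * (((real n + \<beta>) gchoose k) * ((\<alpha> + real j) gchoose (j - k)))" .
  qed
  also have "\<dots> = ((real n + \<alpha>) gchoose (n - j)) * (\<Sum>k=0..j. ((real n + \<beta>) gchoose k) * ((\<alpha> + real j) gchoose (j - k)))"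
    by (simp add: sum_distrib_left atLeast0AtMost)
  also have "\<dots> = ((real n + \<alpha>) gchoose (n - j)) * ((real n + \<beta> + (\<alpha> + real j)) gchoose j)"
    by (simp add: gbinomial_Vandermonde)
  finally show ?thesis by (simp add: cc_def add_ac)
qed

lemma jacobiP_y:
  "jacobiP n \<alpha> \<beta> x = (\<Sum>j\<le>n. complex_of_real (cc \<alpha> \<beta> n j) * ((x - 1) / 2) ^ j)"
proof -
  define y where "y = (x - 1) / 2"
  define a where "a k = complex_of_real (((real n + \<alpha>) gchoose (n - k)) * ((real n + \<beta>) gchoose k))" for k
  have xe: "x - 1 = 2 * y" "x + 1 = 2 * (1 + y)" by (auto simp: y_def field_simps)
  have "jacobiP n \<alpha> \<beta> x = (\<Sum>k\<le>n. a k * y ^ k * (1 + y) ^ (n - k))"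
    unfolding jacobiP_def sum_divide_distrib
  proof (rule sum.cong)
    fix k assume "k \<in> {..n}"
    hence "(2::complex) ^ n = 2 ^ k * 2 ^ (n - k)" by (simp add: power_add[symmetric])
    moreover have "(x - 1) ^ k = 2 ^ k * y ^ k" by (simp add: xe power_mult_distrib)
    moreover have "(x + 1) ^ (n - k) = 2 ^ (n - k) * (1 + y) ^ (n - k)"
      by (simp only: xe power_mult_distrib)
    ultimately show "complex_of_real (((real n + \<alpha>) gchoose (n - k)) * ((real n + \<beta>) gchoose k)) * (x - 1) ^ k * (x + 1) ^ (n - k) / 2 ^ n
        = a k * y ^ k * (1 + y) ^ (n - k)"
      by (simp add: a_def)
  qed simp
  also have "\<dots> = (\<Sum>k\<le>n. \<Sum>m\<le>n - k. a k * of_nat ((n - k) choose m) * y ^ (k + m))"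
  proof (rule sum.cong[OF refl])
    fix k assume "k \<in> {..n}"
    have "(1 + y) ^ (n - k) = (\<Sum>m\<le>n - k. of_nat ((n - k) choose m) * y ^ m)"
      using binomial_ring[of y 1 "n - k"] by (simp add: add.commute)
    thus "a k * y ^ k * (1 + y) ^ (n - k) = (\<Sum>m\<le>n - k. a k * of_nat ((n - k) choose m) * y ^ (k + m))"
      by (simp add: sum_distrib_left power_add mult_ac)
  qed
  also have "\<dots> = (\<Sum>(k, m)\<in>{(k, m). k + m \<le> n}. a k * of_nat ((n - k) choose m) * y ^ (k + m))"
  proof -
    have e: "{(k, m). k + m \<le> n} = Sigma {..n} (\<lambda>k. {..n - k})" by auto
    show ?thesis unfolding e by (subst sum.Sigma) auto
  qed
  also have "\<dots> = (\<Sum>j\<le>n. \<Sum>k\<le>j. a k * of_nat ((n - k) choose (j - k)) * y ^ (k + (j - k)))"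
    by (rule sum.triangle_reindex_eq)
  also have "\<dots> = (\<Sum>j\<le>n. (\<Sum>k\<le>j. a k * of_nat ((n - k) choose (j - k))) * y ^ j)"
    by (rule sum.cong[OF refl]) (auto simp: sum_distrib_right intro!: sum.cong)
  also have "\<dots> = (\<Sum>j\<le>n. complex_of_real (cc \<alpha> \<beta> n j) * y ^ j)"
  proof (rule sum.cong[OF refl])
    fix j assume "j \<in> {..n}"
    hence "(\<Sum>k\<le>j. a k * of_nat ((n - k) choose (j - k))) = complex_of_real (cc \<alpha> \<beta> n j)"
    proof -
      have "(\<Sum>k\<le>j. a k * of_nat ((n - k) choose (j - k))) = complex_of_real
          (\<Sum>k\<le>j. ((real n + \<alpha>) gchoose (n - k)) * ((real n + \<beta>) gchoose k) * real ((n - k) choose (j - k)))"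
        by (simp add: a_def)
      also have "\<dots> = complex_of_real (cc \<alpha> \<beta> n j)"
        using \<open>j \<in> {..n}\<close> by (simp only: vand_step atMost_iff)
      finally show ?thesis .
    qed
    thus "(\<Sum>k\<le>j. a k * of_nat ((n - k) choose (j - k))) * y ^ j = complex_of_real (cc \<alpha> \<beta> n j) * y ^ j" by simp
  qed
  finally show ?thesis by (simp only: y_def)
qed


definition Fc :: "nat \<Rightarrow> nat \<Rightarrow> real" where
  "Fc j K = (if K \<le> j then (-1) ^ (j + K) * real ((2 * j) choose (j + K)) / 4 ^ j else 0)"

lemma Fc_shift:
  assumes "i \<le> 2 * j"
  shows "Fc j (nat \<bar>int i - int j\<bar>) = (-1) ^ i * real ((2 * j) choose i) / 4 ^ j"
proof (cases "j \<le> i")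
  case True
  hence "nat \<bar>int i - int j\<bar> = i - j" by simp
  moreover have "j + (i - j) = i" using True by simp
  ultimately show ?thesis using True assms by (simp add: Fc_def)
next
  case False
  hence K: "nat \<bar>int i - int j\<bar> = j - i" by simp
  have e: "j + (j - i) = 2 * j - i" using False by simp
  have "(2 * j) choose (2 * j - i) = (2 * j) choose i"
    using assms binomial_symmetric[of i "2 * j"] by simp
  moreover have "((-1::real) ^ (2 * j - i)) = (-1) ^ i"
  proof -
    have "even (2 * j - i) = even i" using assms by auto
    thus ?thesis by (simp add: minus_one_power_iff)
  qed
  ultimately show ?thesis using False K e by (simp add: Fc_def)
qed

lemma ypow:
  fixes u :: complex
  assumes u: "u \<noteq> 0" and jn: "j \<le> n"
  shows "(((u + inverse u) / 2 - 1) / 2) ^ j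
       = (\<Sum>k = -int n..int n. complex_of_real (Fc j (nat \<bar>k\<bar>)) * u powi k)"
proof -
  define H where "H k = complex_of_real (Fc j (nat \<bar>k\<bar>)) * u powi k" for k
  have y: "((u + inverse u) / 2 - 1) / 2 = (u - 1) ^ 2 / (4 * u)"
    using u by (simp add: field_simps power2_eq_square)
  have "(((u + inverse u) / 2 - 1) / 2) ^ j = (u + (-1)) ^ (2 * j) / (4 ^ j * u ^ j)"
    unfolding y by (simp add: power_divide power_mult_distrib power_mult)
  also have "\<dots> = (\<Sum>i\<le>2 * j. of_nat ((2 * j) choose i) * u ^ i * (-1) ^ (2 * j - i)) / (4 ^ j * u ^ j)"
    by (simp only: binomial_ring)
  also have "\<dots> = (\<Sum>i\<le>2 * j. H (int i - int j))"
    unfolding sum_divide_distrib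
  proof (rule sum.cong[OF refl])
    fix i assume "i \<in> {..2 * j}"
    hence i: "i \<le> 2 * j" by simp
    have m: "((-1::complex) ^ (2 * j - i)) = (-1) ^ i"
    proof -
      have "even (2 * j - i) = even i" using i by auto
      thus ?thesis by (simp add: minus_one_power_iff)
    qed
    have p: "u powi (int i - int j) = u ^ i / u ^ j"
      using u by (simp add: power_int_diff)
    show "of_nat ((2 * j) choose i) * u ^ i * (-1) ^ (2 * j - i) / (4 ^ j * u ^ j) = H (int i - int j)"
      unfolding H_def p Fc_shift[OF i] m by (simp add: field_simps)
  qed
  also have "\<dots> = (\<Sum>k = -int j..int j. H k)"
    by (rule sum.reindex_bij_witness[where i = "\<lambda>k. nat (k + int j)" and j = "\<lambda>i. int i - int j"]) auto
  also have "\<dots> = (\<Sum>k = -int n..int n. H k)"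
  proof (rule sum.mono_neutral_left)
    show "{- int j..int j} \<subseteq> {- int n..int n}" using jn by auto
    show "\<forall>k\<in>{- int n..int n} - {- int j..int j}. H k = 0"
      by (auto simp: H_def Fc_def)
  qed simp
  finally show ?thesis by (simp add: H_def)
qed


lemma alg:
  fixes pa pb ph fm fr fi fK fKi c d PP pr s pN pH :: real
  assumes "pa \<noteq> 0" "pb \<noteq> 0" "ph \<noteq> 0" "fm \<noteq> 0" "fr \<noteq> 0" "fi \<noteq> 0" "fK \<noteq> 0" "fKi \<noteq> 0" "c \<noteq> 0" "d \<noteq> 0"
  shows "PP * (pa * pr) / (fm * c * fK) * (s * fm / fr * pN * pH / (pa * pb) / fi)
       = pr / fr * (PP * pN / fKi) * s * ((c * d) * ph * pH * fKi / (((c * ph * fK) * pb) * fi)) / (c * d)"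
  using assms by (simp add: field_simps)

lemma term_eq:
  fixes \<alpha> \<beta> :: real
  assumes a: "\<alpha> > -1" and Kn: "K \<le> n" and iK: "i \<le> n - K"
  shows "pochhammer (real n + \<alpha> + \<beta> + 1) K * pochhammer (real K + \<alpha> + 1) (n - K)
     / (fact (n - K) * 2 ^ (2 * K) * Gamma (real K + 1))
     * (pochhammer (real K - real n) i * pochhammer (real n + real K + \<alpha> + \<beta> + 1) i * pochhammer (real K + 1 / 2) i
            / (pochhammer (real K + \<alpha> + 1) i * pochhammer (2 * real K + 1) i) * 1 ^ i / fact i)
     = cc \<alpha> \<beta> n (K + i) * Fc (K + i) K"
proof -
  define m where "m = n - K"
  define r where "r = m - i"
  have mr: "m = i + r" "n = K + i + r" using Kn iK by (auto simp: m_def r_def)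
  define P1 where "P1 = pochhammer (real n + \<alpha> + \<beta> + 1) K"
  define pa where "pa = pochhammer (real K + \<alpha> + 1) i"
  define pr where "pr = pochhammer (real K + \<alpha> + 1 + real i) r"
  define pb where "pb = pochhammer (2 * real K + 1) i"
  define ph where "ph = pochhammer (1 / 2 :: real) K"
  define pN where "pN = pochhammer (real n + real K + \<alpha> + \<beta> + 1) i"
  define pH where "pH = pochhammer (real K + 1 / 2) i"
  have H1: "(real n + \<alpha>) gchoose (n - (K + i)) = pr / fact r"
  proof -
    have e1: "n - (K + i) = r" using mr by simp
    have e2: "real n + \<alpha> - real r + 1 = real K + \<alpha> + 1 + real i" using mr by simp
    show ?thesis by (simp only: e1 gbinomial_pochhammer' e2 pr_def)
  qed
  have H2: "(real n + \<alpha> + \<beta> + real (K + i)) gchoose (K + i) = P1 * pN / fact (K + i)"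
  proof -
    have "pochhammer (real n + \<alpha> + \<beta> + 1) (K + i) = P1 * pN"
      unfolding P1_def pN_def pochhammer_product' by (simp add: add_ac)
    thus ?thesis by (simp add: gbinomial_pochhammer')
  qed
  have H4: "pochhammer (real K + \<alpha> + 1) m = pa * pr"
    unfolding pa_def pr_def mr(1) pochhammer_product' by simp
  have H5: "pochhammer (real K - real n) i = (-1) ^ i * fact m / fact r"
  proof -
    have "real K - real n = - real m" using Kn by (simp add: m_def)
    hence "pochhammer (real K - real n) i = (-1) ^ i * pochhammer (real m - real i + 1) i"
      by (simp add: pochhammer_minus)
    moreover have "pochhammer (real m - real i + 1) i = fact m / fact r"
    proof -
      have im: "i \<le> m" using iK by (simp add: m_def)
      have mir: "m - i = r" by (simp add: r_def)
      have "real (m choose i) = fact m / (fact i * fact (m - i))" using im by (rule binomial_fact)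
      hence "real (m choose i) = fact m / (fact i * fact r)" by (simp only: mir)
      moreover have "real (m choose i) = pochhammer (real m - real i + 1) i / fact i"
        by (simp add: binomial_gbinomial gbinomial_pochhammer')
      ultimately show ?thesis by (simp add: field_simps)
    qed
    ultimately show ?thesis by simp
  qed
  have H6: "real ((2 * (K + i)) choose (K + i + K)) = fact (2 * (K + i)) / (fact (K + i + K) * fact i)"
    using binomial_fact[of "K + i + K" "2 * (K + i)"] by simp
  have H7: "(fact (K + i + K) :: real) = fact (2 * K) * pb"
  proof -
    have "(fact (K + i + K) :: real) = pochhammer 1 (2 * K + i)" by (simp add: pochhammer_fact add_ac mult_2)
    also have "\<dots> = fact (2 * K) * pb"
      unfolding pochhammer_product' pb_def by (simp add: pochhammer_fact add_ac)
    finally show ?thesis .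
  qed
  have dbl: "(fact (2 * t) :: real) = 4 ^ t * pochhammer (1 / 2) t * fact t" for t
    using pochhammer_double[of "1 / 2 :: real" t]
    by (simp add: pochhammer_fact power_mult)
  have H9: "pochhammer (1 / 2 :: real) (K + i) = ph * pH"
    unfolding ph_def pH_def pochhammer_product' by (simp add: add_ac)
  have H8: "(fact (2 * (K + i)) :: real) = (4 ^ K * 4 ^ i) * ph * pH * fact (K + i)"
    using dbl[of "K + i"] H9 by (simp add: power_add)
  have H10: "(fact (2 * K) :: real) = 4 ^ K * ph * fact K" using dbl[of K] by (simp add: ph_def)
  have H11: "Gamma (real K + 1) = fact K" using Gamma_fact[of K] by (simp add: add.commute)
  have H12: "((-1::real) ^ (K + i + K)) = (-1) ^ i"
    by (simp add: minus_one_power_iff)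
  have pow: "(2::real) ^ (2 * K) = 4 ^ K" by (simp add: power_mult)
  have nz: "pa \<noteq> 0" "pb \<noteq> 0" "ph \<noteq> 0"
    using a unfolding pa_def pb_def ph_def by (auto simp: pochhammer_eq_0_iff)
  have Fc: "Fc (K + i) K = (-1) ^ i * real ((2 * (K + i)) choose (K + i + K)) / 4 ^ (K + i)"
    unfolding Fc_def using H12 by simp
  show ?thesis
    unfolding cc_def Fc H1 H2 m_def[symmetric] H4 H5 H6 H7 H8 H10 H11 pow
    unfolding P1_def[symmetric] pN_def[symmetric] pH_def[symmetric] pa_def[symmetric] pb_def[symmetric]
    unfolding power_add
    using alg[where pa=pa and pb=pb and ph=ph and fm="fact m" and fr="fact r" and fi="fact i"
        and fK="fact K" and fKi="fact (K + i)" and c="4 ^ K" and d="4 ^ i" and PP=P1 and pr=pr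
        and s="(-1) ^ i" and pN=pN and pH=pH] nz
    by simp
qed


lemma coeff:
  fixes \<alpha> \<beta> :: real
  assumes a: "\<alpha> > -1" and Kn: "K \<le> n"
  shows "(\<Sum>j\<le>n. cc \<alpha> \<beta> n j * Fc j K) = jacobi_d \<alpha> \<beta> K n"
proof -
  define T where "T i = pochhammer (real K - real n) i * pochhammer (real n + real K + \<alpha> + \<beta> + 1) i * pochhammer (real K + 1 / 2) i
            / (pochhammer (real K + \<alpha> + 1) i * pochhammer (2 * real K + 1) i) * 1 ^ i / fact i" for i
  define pref where "pref = pochhammer (real n + \<alpha> + \<beta> + 1) K * pochhammer (real K + \<alpha> + 1) (n - K)
     / (fact (n - K) * 2 ^ (2 * K) * Gamma (real K + 1))"
  have "(\<Sum>j\<le>n. cc \<alpha> \<beta> n j * Fc j K) = (\<Sum>j\<in>{K..n}. cc \<alpha> \<beta> n j * Fc j K)"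
    by (rule sum.mono_neutral_right) (auto simp: Fc_def)
  also have "\<dots> = (\<Sum>i\<le>n - K. cc \<alpha> \<beta> n (K + i) * Fc (K + i) K)"
    using Kn by (intro sum.reindex_bij_witness[where i = "\<lambda>i. K + i" and j = "\<lambda>j. j - K"]) auto
  also have "\<dots> = (\<Sum>i\<le>n - K. pref * T i)"
    by (rule sum.cong[OF refl]) (use term_eq[OF a Kn] in \<open>auto simp: pref_def T_def\<close>)
  also have "\<dots> = pref * (\<Sum>i. T i)"
  proof -
    have "(\<Sum>i. T i) = (\<Sum>i\<le>n - K. T i)"
    proof (rule suminf_finite)
      fix i assume "i \<notin> {..n - K}"
      hence "n - K < i" by simp
      hence "pochhammer (real K - real n) i = 0"
        using Kn by (auto simp: pochhammer_eq_0_iff intro!: exI[of _ "n - K"])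
      thus "T i = 0" by (simp add: T_def)
    qed simp
    thus ?thesis by (simp add: sum_distrib_left)
  qed
  also have "\<dots> = jacobi_d \<alpha> \<beta> K n"
    unfolding jacobi_d_def hyp3F2_def pref_def T_def ..
  finally show ?thesis .
qed

theorem theorem3p1:
  fixes \<alpha> \<beta> \<rho> :: real and n :: nat and u :: complex
  assumes "\<alpha> > -1" and "\<beta> > -1"
    and "\<rho> \<ge> 1" and "norm u = \<rho>"
  shows "jacobiP n \<alpha> \<beta> ((u + inverse u) / 2)
           = (\<Sum>k = -int n..int n. complex_of_real (jacobi_d \<alpha> \<beta> (nat \<bar>k\<bar>) n) * u powi k)"
proof -
  have u: "u \<noteq> 0" using assms by auto
  have "jacobiP n \<alpha> \<beta> ((u + inverse u) / 2)
      = (\<Sum>j\<le>n. complex_of_real (cc \<alpha> \<beta> n j) * (((u + inverse u) / 2 - 1) / 2) ^ j)"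
    by (rule jacobiP_y)
  also have "\<dots> = (\<Sum>j\<le>n. complex_of_real (cc \<alpha> \<beta> n j) *
        (\<Sum>k = -int n..int n. complex_of_real (Fc j (nat \<bar>k\<bar>)) * u powi k))"
    by (rule sum.cong[OF refl]) (simp add: ypow[OF u])
  also have "\<dots> = (\<Sum>k = -int n..int n. \<Sum>j\<le>n. complex_of_real (cc \<alpha> \<beta> n j * Fc j (nat \<bar>k\<bar>)) * u powi k)"
    by (simp add: sum_distrib_left mult_ac sum.swap[of _ "{..n}"])
  also have "\<dots> = (\<Sum>k = -int n..int n. complex_of_real (\<Sum>j\<le>n. cc \<alpha> \<beta> n j * Fc j (nat \<bar>k\<bar>)) * u powi k)"
    by (simp add: sum_distrib_right)
  also have "\<dots> = (\<Sum>k = -int n..int n. complex_of_real (jacobi_d \<alpha> \<beta> (nat \<bar>k\<bar>) n) * u powi k)"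
  proof (rule sum.cong[OF refl])
    fix k assume "k \<in> {-int n..int n}"
    hence "nat \<bar>k\<bar> \<le> n" by auto
    thus "complex_of_real (\<Sum>j\<le>n. cc \<alpha> \<beta> n j * Fc j (nat \<bar>k\<bar>)) * u powi k
        = complex_of_real (jacobi_d \<alpha> \<beta> (nat \<bar>k\<bar>) n) * u powi k"
      using coeff[OF assms(1)] by simp
  qed
  finally show ?thesis .
qed

end
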